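(* Let $(M,f,g)$ be an $(m,n)$-hypermodule over a commutative Krasner $(m,n)$-hyperring $(R,f',g')$ with scalar identity $1$, and let $Q$ be an $n$-ary weakly classical prime subhypermodule of $M$. Then for all $r_1,\dots,r_{n-1}\in R$ and $a\in M$, $$Q_{g(r_1^{n-1},a)}\subseteq F_{g(r_1^{n-1},a)}\cup Q_{g(r_1,1^{(n-2)},a)}\cup\cdots\cup Q_{g(r_{n-1},1^{(n-2)},a)}.$$
   Context: A commutative Krasner $(m,n)$-hyperring with scalar identity $1$ is a triple $(R,f',g')$ where $(R,f')$ is a canonical $m$-ary hypergroup with zero $0$, $(R,g')$ is a commutative $n$-ary semigroup, $g'$ is distributive over $f'$, $0$ is a zero element for $g'$, and $g'(x,1^{(n-1)})=x$. Notation: $x_i^j$ denotes $x_i,\dots,x_j$ and $x^{(k)}$ denotes $x$ repeated $k$ times. An $(m,n)$-hypermodule over $R$ is a triple $(M,f,g)$ with $(M,f)$ a canonical $m$-ary hypergroup with zero $0$ and $g:R^{n-1}\times M\to P^*(M)$ satisfying: $g(r_1^{n-1},f(x_1^m))=f(g(r_1^{n-1},x_1),\dots,g(r_1^{n-1},x_m))$; $g(r_1^{i-1},f'(s_1^m),r_{i+1}^{n-1},x)=f(g(r_1^{i-1},s_1,r_{i+1}^{n-1},x),\dots,g(r_1^{i-1},s_m,r_{i+1}^{n-1},x))$; $g(r_1^{i-1},g'(r_i^{i+n-1}),r_{i+n}^{2n-2},x)=g(r_1^{n-1},g(r_n^{2n-2},x))$; $g(r_1^{i-1},0,r_{i+1}^{n-1},x)=\{0\}$;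 moreover $g(1^{(n-1)},a)=\{a\}$. For subsets, $g(A_1,\dots,A_{n-1},X)$ is the union of $g(r_1^{n-1},x)$ over $r_i\in A_i$, $x\in X$. A subhypermodule is a nonempty $N\subseteq M$ with $(N,f)$ an $m$-ary subhypergroup and $g(R^{(n-1)},N)\subseteq N$. A proper subhypermodule $Q$ is $n$-ary weakly classical prime if for $r_1^{n-1}\in R$, $a\in M$, $0\notin g(r_1^{n-1},a)\subseteq Q$ implies $g(r_i,1^{(n-2)},a)\subseteq Q$ for some $1\le i\le n-1$. For a nonempty $X\subseteq M$ and a subhypermodule $Q$: $Q_X=\{r\in R: g(r,1^{(n-2)},X)\subseteq Q\}$ and $F_X=\{r\in R: r\neq0,\ 0\in g(r,1^{(n-2)},X)\}$. *)

theory Defs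
  imports Main "HOL-Library.Multiset"
begin

text \<open>Conventions: the carriers R and M are the whole types 'r and 'm.
  An m-ary hyperoperation is a map from lists (of length m) to sets; an
  argument tuple x_1^k is a list of length k (0-based positions).\<close>

definition sg :: "'a list \<Rightarrow> 'a set list" where
  "sg xs = map (\<lambda>x. {x}) xs"

definition lift :: "('a list \<Rightarrow> 'a set) \<Rightarrow> 'a set list \<Rightarrow> 'a set" where
  "lift F As = \<Union> {F xs | xs. list_all2 (\<in>) xs As}"

definition hassoc :: "nat \<Rightarrow> ('a list \<Rightarrow> 'a set) \<Rightarrow> bool" where
  "hassoc m f \<longleftrightarrow> (\<forall>xs i j. length xs = 2*m - 1 \<and> i < m \<and> j < m \<longrightarrow>
     lift f (sg (take i xs) @ [f (take m (drop i xs))] @ sg (drop (i+m) xs)) =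
     lift f (sg (take j xs) @ [f (take m (drop j xs))] @ sg (drop (j+m) xs)))"

definition hcomm :: "nat \<Rightarrow> ('a list \<Rightarrow> 'b) \<Rightarrow> bool" where
  "hcomm m f \<longleftrightarrow> (\<forall>xs ys. length xs = m \<and> mset ys = mset xs \<longrightarrow> f xs = f ys)"

definition hreproductive :: "nat \<Rightarrow> ('a list \<Rightarrow> 'a set) \<Rightarrow> 'a set \<Rightarrow> bool" where
  "hreproductive m f H \<longleftrightarrow> (\<forall>as i. length as = m - 1 \<and> set as \<subseteq> H \<and> i < m \<longrightarrow>
     lift f (sg (take i as) @ [H] @ sg (drop i as)) = H)"

definition hinv :: "nat \<Rightarrow> ('a list \<Rightarrow> 'a set) \<Rightarrow> 'a \<Rightarrow> 'a \<Rightarrow> 'a" where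
  "hinv m f z x = (THE y. z \<in> f (x # y # replicate (m-2) z))"

definition canonical_mhypergroup :: "nat \<Rightarrow> ('a list \<Rightarrow> 'a set) \<Rightarrow> 'a \<Rightarrow> bool" where
  "canonical_mhypergroup m f z \<longleftrightarrow>
     2 \<le> m \<and>
     (\<forall>xs. length xs = m \<longrightarrow> f xs \<noteq> {}) \<and>
     hassoc m f \<and> hreproductive m f UNIV \<and> hcomm m f \<and>
     (\<forall>x. f (x # replicate (m-1) z) = {x}) \<and>
     (\<forall>e. (\<forall>x. f (x # replicate (m-1) e) = {x}) \<longrightarrow> e = z) \<and>
     (\<forall>x. \<exists>!y. z \<in> f (x # y # replicate (m-2) z)) \<and>
     (\<forall>xs x i. length xs = m \<and> i < m \<and> x \<in> f xs \<longrightarrow>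
        xs ! i \<in> f (x # map (hinv m f z) (take i xs @ drop (Suc i) xs)))"

definition nsemigroup :: "nat \<Rightarrow> ('a list \<Rightarrow> 'a) \<Rightarrow> bool" where
  "nsemigroup n g \<longleftrightarrow> 2 \<le> n \<and> (\<forall>xs i j. length xs = 2*n - 1 \<and> i < n \<and> j < n \<longrightarrow>
     g (take i xs @ [g (take n (drop i xs))] @ drop (i+n) xs) =
     g (take j xs @ [g (take n (drop j xs))] @ drop (j+n) xs))"

definition krasner_hyperring ::
  "nat \<Rightarrow> nat \<Rightarrow> ('r list \<Rightarrow> 'r set) \<Rightarrow> ('r list \<Rightarrow> 'r) \<Rightarrow> 'r \<Rightarrow> 'r \<Rightarrow> bool" where
  "krasner_hyperring m n addR mulR z one \<longleftrightarrow>
     canonical_mhypergroup m addR z \<and> nsemigroup n mulR \<and> hcomm n mulR \<and>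
     (\<forall>xs ys i. length xs = n - 1 \<and> length ys = m \<and> i < n \<longrightarrow>
        {mulR (take i xs @ [y] @ drop i xs) | y. y \<in> addR ys} =
        addR (map (\<lambda>y. mulR (take i xs @ [y] @ drop i xs)) ys)) \<and>
     (\<forall>xs i. length xs = n - 1 \<and> i < n \<longrightarrow> mulR (take i xs @ [z] @ drop i xs) = z) \<and>
     (\<forall>x. mulR (x # replicate (n-1) one) = x)"

definition hypermodule ::
  "nat \<Rightarrow> nat \<Rightarrow> ('r list \<Rightarrow> 'r set) \<Rightarrow> ('r list \<Rightarrow> 'r) \<Rightarrow> 'r \<Rightarrow> 'r \<Rightarrow>
   ('m list \<Rightarrow> 'm set) \<Rightarrow> ('r list \<Rightarrow> 'm \<Rightarrow> 'm set) \<Rightarrow> 'm \<Rightarrow> bool" where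
  "hypermodule m n addR mulR zR one f g zM \<longleftrightarrow>
     canonical_mhypergroup m f zM \<and>
     (\<forall>rs x. length rs = n - 1 \<longrightarrow> g rs x \<noteq> {}) \<and>
     (\<forall>rs xs. length rs = n - 1 \<and> length xs = m \<longrightarrow>
        (\<Union>x\<in>f xs. g rs x) = lift f (map (g rs) xs)) \<and>
     (\<forall>rs ss i x. length rs = n - 2 \<and> length ss = m \<and> i < n - 1 \<longrightarrow>
        (\<Union>s\<in>addR ss. g (take i rs @ [s] @ drop i rs) x) =
        lift f (map (\<lambda>s. g (take i rs @ [s] @ drop i rs) x) ss)) \<and>
     (\<forall>rs i x. length rs = 2*n - 2 \<and> i < n - 1 \<longrightarrow>
        g (take i rs @ [mulR (take n (drop i rs))] @ drop (i+n) rs) x =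
        (\<Union>y\<in>g (drop (n-1) rs) x. g (take (n-1) rs) y)) \<and>
     (\<forall>rs i x. length rs = n - 2 \<and> i < n - 1 \<longrightarrow>
        g (take i rs @ [zR] @ drop i rs) x = {zM}) \<and>
     (\<forall>a. g (replicate (n-1) one) a = {a})"

definition msubhypergroup :: "nat \<Rightarrow> ('a list \<Rightarrow> 'a set) \<Rightarrow> 'a set \<Rightarrow> bool" where
  "msubhypergroup m f N \<longleftrightarrow> N \<noteq> {} \<and>
     (\<forall>xs. length xs = m \<and> set xs \<subseteq> N \<longrightarrow> f xs \<subseteq> N) \<and> hreproductive m f N"

definition subhypermodule ::
  "nat \<Rightarrow> nat \<Rightarrow> ('m list \<Rightarrow> 'm set) \<Rightarrow> ('r list \<Rightarrow> 'm \<Rightarrow> 'm set) \<Rightarrow> 'm set \<Rightarrow> bool" where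
  "subhypermodule m n f g N \<longleftrightarrow> msubhypergroup m f N \<and>
     (\<forall>rs x. length rs = n - 1 \<and> x \<in> N \<longrightarrow> g rs x \<subseteq> N)"

definition weakly_classical_prime ::
  "nat \<Rightarrow> nat \<Rightarrow> 'r \<Rightarrow> ('m list \<Rightarrow> 'm set) \<Rightarrow> ('r list \<Rightarrow> 'm \<Rightarrow> 'm set) \<Rightarrow> 'm \<Rightarrow> 'm set \<Rightarrow> bool" where
  "weakly_classical_prime m n one f g zM Q \<longleftrightarrow>
     subhypermodule m n f g Q \<and> Q \<noteq> UNIV \<and>
     (\<forall>rs a. length rs = n - 1 \<and> zM \<notin> g rs a \<and> g rs a \<subseteq> Q \<longrightarrow>
        (\<exists>i < n - 1. g (rs ! i # replicate (n-2) one) a \<subseteq> Q))"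

definition gset :: "('r list \<Rightarrow> 'm \<Rightarrow> 'm set) \<Rightarrow> 'r list \<Rightarrow> 'm set \<Rightarrow> 'm set" where
  "gset g rs X = (\<Union>x\<in>X. g rs x)"

definition QX :: "nat \<Rightarrow> 'r \<Rightarrow> ('r list \<Rightarrow> 'm \<Rightarrow> 'm set) \<Rightarrow> 'm set \<Rightarrow> 'm set \<Rightarrow> 'r set" where
  "QX n one g Q X = {r. gset g (r # replicate (n-2) one) X \<subseteq> Q}"

definition FX :: "nat \<Rightarrow> 'r \<Rightarrow> 'r \<Rightarrow> ('r list \<Rightarrow> 'm \<Rightarrow> 'm set) \<Rightarrow> 'm \<Rightarrow> 'm set \<Rightarrow> 'r set" where
  "FX n zR one g zM X = {r. r \<noteq> zR \<and> zM \<in> gset g (r # replicate (n-2) one) X}"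

end

theory Submission
  imports Defs
begin

lemma assoc_step:
  assumes H: "hypermodule m n addR mulR zR one f g zM"
    and n2: "2 \<le> n" and len: "length rs = n - 1"
  shows "g (mulR (r # replicate (n-2) one @ [hd rs]) # tl rs) a
         = gset g (r # replicate (n-2) one) (g rs a)"
proof -
  have ax: "\<forall>rs i x. length rs = 2*n - 2 \<and> i < n - 1 \<longrightarrow>
        g (take i rs @ [mulR (take n (drop i rs))] @ drop (i+n) rs) x =
        (\<Union>y\<in>g (drop (n-1) rs) x. g (take (n-1) rs) y)"
    using H unfolding hypermodule_def by blast
  obtain k where nk: "n = Suc (Suc k)" using n2 by (metis add_2_eq_Suc le_Suc_ex)
  define L where "L = (r # replicate (n-2) one) @ rs"
  have lL: "length L = 2*n-2" using len n2 unfolding L_def by simp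
  have rsne: "rs = hd rs # tl rs" using len n2
    by (cases rs) auto
  have e1: "take n L = r # replicate (n-2) one @ [hd rs]"
  proof -
    have "take n L = (r # replicate (n-2) one) @ take 1 rs"
      unfolding L_def using nk by simp
    also have "take 1 rs = [hd rs]" by (subst rsne) simp
    finally show ?thesis by simp
  qed
  have e2: "drop n L = tl rs"
  proof -
    have "drop n L = drop 1 rs" unfolding L_def using nk by simp
    thus ?thesis by (simp add: drop_Suc)
  qed
  have e3: "drop (n-1) L = rs" unfolding L_def using nk by simp
  have e4: "take (n-1) L = r # replicate (n-2) one" unfolding L_def using nk by simp
  have "g (take 0 L @ [mulR (take n (drop 0 L))] @ drop (0+n) L) a =
        (\<Union>y\<in>g (drop (n-1) L) a. g (take (n-1) L) y)"
    using lL n2 by (intro ax[rule_format]) simp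
  thus ?thesis using e1 e2 e3 e4 by (simp add: gset_def)
qed

theorem mainTheorem9:
  fixes m n :: nat
    and addR :: "'r list \<Rightarrow> 'r set" and mulR :: "'r list \<Rightarrow> 'r"
    and zR one :: 'r
    and f :: "'m list \<Rightarrow> 'm set" and g :: "'r list \<Rightarrow> 'm \<Rightarrow> 'm set" and zM :: 'm
    and Q :: "'m set"
  assumes "krasner_hyperring m n addR mulR zR one"
    and "hypermodule m n addR mulR zR one f g zM"
    and "weakly_classical_prime m n one f g zM Q"
    and "length rs = n - 1"
  shows "QX n one g Q (g rs a) \<subseteq>
           FX n zR one g zM (g rs a) \<union>
           (\<Union>i<n-1. QX n one g Q (g (rs ! i # replicate (n-2) one) a))"
proof
  fix r assume rQ: "r \<in> QX n one g Q (g rs a)"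
  have n2: "2 \<le> n"
    using conjunct1[OF iffD1[OF nsemigroup_def conjunct1[OF conjunct2[OF iffD1[OF krasner_hyperring_def assms(1)]]]]] .
  have ne: "\<And>rs x. length rs = n - 1 \<Longrightarrow> g rs x \<noteq> {}"
    using conjunct1[OF conjunct2[OF iffD1[OF hypermodule_def assms(2)]]] by blast
  have zax: "\<forall>rs i x. length rs = n - 2 \<and> i < n - 1 \<longrightarrow>
        g (take i rs @ [zR] @ drop i rs) x = {zM}"
    using conjunct1[OF conjunct2[OF conjunct2[OF conjunct2[OF conjunct2[OF conjunct2[OF iffD1[OF hypermodule_def assms(2)]]]]]]] .
  have zero: "\<And>rs x. length rs = n - 2 \<Longrightarrow> g (zR # rs) x = {zM}"
  proof -
    fix rs :: "'r list" and x assume l: "length rs = n - 2"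
    have p: "(0::nat) < n - 1" using n2 by simp
    show "g (zR # rs) x = {zM}" using zax[rule_format, of rs 0 x] l p by simp
  qed
  have W: "subhypermodule m n f g Q \<and> Q \<noteq> UNIV \<and>
     (\<forall>rs a. length rs = n - 1 \<and> zM \<notin> g rs a \<and> g rs a \<subseteq> Q \<longrightarrow>
        (\<exists>i < n - 1. g (rs ! i # replicate (n-2) one) a \<subseteq> Q))"
    using iffD1[OF weakly_classical_prime_def assms(3)] .
  have sub: "subhypermodule m n f g Q" using conjunct1[OF W] .
  have wcp: "\<forall>rs a. length rs = n - 1 \<and> zM \<notin> g rs a \<and> g rs a \<subseteq> Q \<longrightarrow>
        (\<exists>i < n - 1. g (rs ! i # replicate (n-2) one) a \<subseteq> Q)"
    using conjunct2[OF conjunct2[OF W]] .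
  have Qne: "Q \<noteq> {}" using conjunct1[OF iffD1[OF msubhypergroup_def conjunct1[OF iffD1[OF subhypermodule_def sub]]]] .
  have Qcl0: "\<forall>rs x. length rs = n - 1 \<and> x \<in> Q \<longrightarrow> g rs x \<subseteq> Q"
    using conjunct2[OF iffD1[OF subhypermodule_def sub]] .
  have Qcl: "\<And>rs x. length rs = n - 1 \<Longrightarrow> x \<in> Q \<Longrightarrow> g rs x \<subseteq> Q"
    using Qcl0 by blast
  have zQ: "zM \<in> Q"
  proof -
    obtain x where "x \<in> Q" using Qne by blast
    from Qcl[OF _ this, of "zR # replicate (n-2) one"] zero[of "replicate (n-2) one" x] n2
    show ?thesis by simp
  qed
  have l1: "length (replicate (n-2) one) = n - 2" by simp
  have lr1: "length (x # replicate (n-2) one) = n - 1" for x using n2 by simp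
  show "r \<in> FX n zR one g zM (g rs a) \<union>
           (\<Union>i<n-1. QX n one g Q (g (rs ! i # replicate (n-2) one) a))"
  proof (cases "r = zR")
    case True
    have "r \<in> QX n one g Q (g (rs ! 0 # replicate (n-2) one) a)"
    proof -
      obtain y where "y \<in> g (rs ! 0 # replicate (n-2) one) a" using ne[OF lr1] by blast
      hence "gset g (r # replicate (n-2) one) (g (rs ! 0 # replicate (n-2) one) a) = {zM}"
        using True zero[OF l1] unfolding gset_def by auto
      thus ?thesis using zQ unfolding QX_def by simp
    qed
    moreover have "(0::nat) < n - 1" using n2 by simp
    ultimately show ?thesis by blast
  next
    case False
    show ?thesis
    proof (cases "r \<in> FX n zR one g zM (g rs a)")
      case True thus ?thesis by blast
    next
      case nF: False
      define s where "s = mulR (r # replicate (n-2) one @ [hd rs])"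
      have eq: "g (s # tl rs) a = gset g (r # replicate (n-2) one) (g rs a)"
        unfolding s_def by (rule assoc_step[OF assms(2) n2 assms(4)])
      have z: "zM \<notin> g (s # tl rs) a" using nF False eq unfolding FX_def by simp
      have q: "g (s # tl rs) a \<subseteq> Q" using rQ eq unfolding QX_def by simp
      have ls: "length (s # tl rs) = n - 1" using assms(4) n2 by simp
      obtain i where i: "i < n - 1" and gi: "g ((s # tl rs) ! i # replicate (n-2) one) a \<subseteq> Q"
        using wcp ls z q by blast
      show ?thesis
      proof (cases i)
        case 0
        have "gset g (r # replicate (n-2) one) (g (rs ! 0 # replicate (n-2) one) a)
              = g (mulR (r # replicate (n-2) one @ [hd (rs ! 0 # replicate (n-2) one)])
                  # tl (rs ! 0 # replicate (n-2) one)) a"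
          by (rule assoc_step[OF assms(2) n2 lr1, symmetric])
        also have "\<dots> = g (s # replicate (n-2) one) a"
          unfolding s_def using assms(4) n2
          by (cases rs) auto
        finally have "r \<in> QX n one g Q (g (rs ! 0 # replicate (n-2) one) a)"
          using gi 0 unfolding QX_def by simp
        thus ?thesis using i 0 by blast
      next
        case (Suc j)
        have "(s # tl rs) ! i = rs ! i" using Suc assms(4) i
          by (cases rs) auto
        hence "g (rs ! i # replicate (n-2) one) a \<subseteq> Q" using gi by simp
        hence "r \<in> QX n one g Q (g (rs ! i # replicate (n-2) one) a)"
          using Qcl[OF lr1] unfolding QX_def gset_def by blast
        thus ?thesis using i by blast
      qed
    qed
  qed
qed

end
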